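(* For all colour indices $A,B$, $$ \mathcal{X}^2\,g^{AB}=\overline{(\gamma_\mu)_{gh}}\,\overline{\epsilon}^{\,CGH}\,\overline{\psi^h_H}\,\overline{\psi^g_G}\,\overline{\psi^c_C}\,\psi^{Ad}\,V^{Bef}\,\big\{2\beta_{ce}(\gamma^\mu)_{fd}+\beta_{cd}(\gamma^\mu)_{fe}\big\}, $$ where $V^{Cab}:=\epsilon^{ABC}\psi^a_A\psi^b_B$ and $\psi^{Ad}:=g^{AB}\psi^d_B$.
   Context: Colour indices $A,B,\dots\in\{1,2,3\}$; bispinor indices $a,b,\dots\in\{1,2,\dot1,\dot2\}$; summation over repeated indices; spacetime indices raised/lowered with $\eta=\mathrm{diag}(1,-1,-1,-1)$. $\Lambda$ is the complex Grassmann algebra generated by the 24 anticommuting generators $\psi^a_A,\overline{\psi^a_A}$. $g^{AB}=\delta^{AB}$, $\epsilon^{ABC}$ is the totally antisymmetric symbol with $\epsilon^{123}=1$ and $\overline{\epsilon}^{ABC}$ its complex conjugate (equal to it). Spinor structures: $\sigma^\mu=(I,\sigma^1,\sigma^2,\sigma^3)$, $\tilde\sigma^\mu=(I,-\sigma^k)$; in the ordering $(1,2,\dot1,\dot2)$, $(\gamma^\mu)^a{}_b=\begin{pmatrix}0&\tilde\sigma^\mu\\ \sigma^\mu&0\end{pmatrix}$, $\epsilon_{ab}=\begin{pmatrix}\varepsilon&0\\0&-\varepsilon\end{pmatrix}$ with $\varepsilon=\begin{pmatrix}0&1\\-1&0\end{pmatrix}$, $(\gamma^\mu)_{cb}:=(\gamma^\mu)^a{}_b\epsilon_{ac}$,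 $\beta_{ab}=\begin{pmatrix}0&I_2\\ I_2&0\end{pmatrix}$, and $\beta_{abcd}:=\tfrac12\overline{(\gamma_\mu)_{ab}}(\gamma^\mu)_{cd}$. Define $\mathcal{J}^{ab}:=\overline{\psi^a_A}g^{AB}\psi^b_B$ and $\mathcal{X}^2:=4\beta_{bcef}\beta_{ad}\{\mathcal{J}^{ad}\mathcal{J}^{be}\mathcal{J}^{cf}+2\mathcal{J}^{ae}\mathcal{J}^{bf}\mathcal{J}^{cd}\}$. *)

theory Defs
  imports Complex_Main "HOL-Library.Function_Algebras"
begin

text \<open>An element of the Grassmann (exterior) algebra over generators indexed by nat is
represented by its coefficients on the basis monomials e_S (S a finite set of generator
indices, e_S = ordered product of the generators in S in increasing order).\<close>

type_synonym grass = "nat set \<Rightarrow> complex"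

definition gsign :: "nat set \<Rightarrow> nat set \<Rightarrow> complex" where
  "gsign T U = (-1) ^ card {(i, j). i \<in> T \<and> j \<in> U \<and> j < i}"

definition gmul :: "grass \<Rightarrow> grass \<Rightarrow> grass" (infixl "\<odot>" 70) where
  "x \<odot> y = (\<lambda>S. if finite S then (\<Sum>T\<in>Pow S. gsign T (S - T) * x T * y (S - T)) else 0)"

definition gscale :: "complex \<Rightarrow> grass \<Rightarrow> grass" (infixr "\<cdot>\<^sub>G" 75) where
  "c \<cdot>\<^sub>G x = (\<lambda>S. c * x S)"

definition gen :: "nat \<Rightarrow> grass" where
  "gen k = (\<lambda>S. if S = {k} then 1 else 0)"

text \<open>Colour indices A \<in> {0,1,2} (for 1,2,3); bispinor indices a \<in> {0,1,2,3}
(for 1,2,dot1,dot2). The 24 generators: psi^a_A = gen (4A+a), conj psi^a_A = gen (12+4A+a).\<close>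

definition psi :: "nat \<Rightarrow> nat \<Rightarrow> grass" where
  "psi a A = gen (4 * A + a)"

definition psib :: "nat \<Rightarrow> nat \<Rightarrow> grass" where
  "psib a A = gen (12 + 4 * A + a)"

definition gcol :: "nat \<Rightarrow> nat \<Rightarrow> complex" where
  "gcol A B = (if A = B then 1 else 0)"

definition levi :: "nat \<Rightarrow> nat \<Rightarrow> nat \<Rightarrow> complex" where
  "levi A B C =
     (if (A, B, C) \<in> {(0,1,2), (1,2,0), (2,0,1)} then 1
      else if (A, B, C) \<in> {(0,2,1), (2,1,0), (1,0,2)} then -1 else 0)"

definition pauli :: "nat \<Rightarrow> nat \<Rightarrow> nat \<Rightarrow> complex" where
  "pauli k i j =
     (if k = 0 then (if i = j then 1 else 0)
      else if k = 1 then (if i \<noteq> j then 1 else 0)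
      else if k = 2 then (if i = 0 \<and> j = 1 then -\<i> else if i = 1 \<and> j = 0 then \<i> else 0)
      else if k = 3 then (if i = 0 \<and> j = 0 then 1 else if i = 1 \<and> j = 1 then -1 else 0)
      else 0)"

definition sigma :: "nat \<Rightarrow> nat \<Rightarrow> nat \<Rightarrow> complex" where
  "sigma \<mu> i j = pauli \<mu> i j"

definition sigmat :: "nat \<Rightarrow> nat \<Rightarrow> nat \<Rightarrow> complex" where
  "sigmat \<mu> i j = (if \<mu> = 0 then pauli 0 i j else - pauli \<mu> i j)"

definition gammaUD :: "nat \<Rightarrow> nat \<Rightarrow> nat \<Rightarrow> complex" where
  "gammaUD \<mu> a b =
     (if a < 2 \<and> 2 \<le> b \<and> b < 4 then sigmat \<mu> a (b - 2)
      else if 2 \<le> a \<and> a < 4 \<and> b < 2 then sigma \<mu> (a - 2) b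
      else 0)"

definition eps2 :: "nat \<Rightarrow> nat \<Rightarrow> complex" where
  "eps2 i j = (if i = 0 \<and> j = 1 then 1 else if i = 1 \<and> j = 0 then -1 else 0)"

definition eps4 :: "nat \<Rightarrow> nat \<Rightarrow> complex" where
  "eps4 a b =
     (if a < 2 \<and> b < 2 then eps2 a b
      else if 2 \<le> a \<and> a < 4 \<and> 2 \<le> b \<and> b < 4 then - eps2 (a - 2) (b - 2)
      else 0)"

definition gammaDD :: "nat \<Rightarrow> nat \<Rightarrow> nat \<Rightarrow> complex" where
  "gammaDD \<mu> c b = (\<Sum>a<4. gammaUD \<mu> a b * eps4 a c)"

definition eta :: "nat \<Rightarrow> complex" where
  "eta \<mu> = (if \<mu> = 0 then 1 else -1)"

definition gammaLDD :: "nat \<Rightarrow> nat \<Rightarrow> nat \<Rightarrow> complex" where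
  "gammaLDD \<mu> c b = eta \<mu> * gammaDD \<mu> c b"

definition beta2 :: "nat \<Rightarrow> nat \<Rightarrow> complex" where
  "beta2 a b = (if (a < 2 \<and> b = a + 2) \<or> (2 \<le> a \<and> a < 4 \<and> a = b + 2) then 1 else 0)"

definition beta4 :: "nat \<Rightarrow> nat \<Rightarrow> nat \<Rightarrow> nat \<Rightarrow> complex" where
  "beta4 a b c d = (1/2) * (\<Sum>\<mu><4. cnj (gammaLDD \<mu> a b) * gammaDD \<mu> c d)"

definition Jc :: "nat \<Rightarrow> nat \<Rightarrow> grass" where
  "Jc a b = (\<Sum>A<3. \<Sum>B<3. gcol A B \<cdot>\<^sub>G (psib a A \<odot> psi b B))"

definition X2 :: grass where
  "X2 = 4 \<cdot>\<^sub>G (\<Sum>a<4. \<Sum>b<4. \<Sum>c<4. \<Sum>d<4. \<Sum>e<4. \<Sum>f<4.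
          (beta4 b c e f * beta2 a d) \<cdot>\<^sub>G
            (Jc a d \<odot> Jc b e \<odot> Jc c f + 2 \<cdot>\<^sub>G (Jc a e \<odot> Jc b f \<odot> Jc c d)))"

definition Vc :: "nat \<Rightarrow> nat \<Rightarrow> nat \<Rightarrow> grass" where
  "Vc C a b = (\<Sum>A<3. \<Sum>B<3. levi A B C \<cdot>\<^sub>G (psi a A \<odot> psi b B))"

definition psiU :: "nat \<Rightarrow> nat \<Rightarrow> grass" where
  "psiU A d = (\<Sum>B<3. gcol A B \<cdot>\<^sub>G psi d B)"

end

theory Submission
  imports Defs
begin

lemma gscale_add_right: "c \<cdot>\<^sub>G (x + y) = c \<cdot>\<^sub>G x + c \<cdot>\<^sub>G y"
  by (auto simp: gscale_def fun_eq_iff algebra_simps)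
lemma gscale_add_left: "(c + d) \<cdot>\<^sub>G x = c \<cdot>\<^sub>G x + d \<cdot>\<^sub>G x"
  by (auto simp: gscale_def fun_eq_iff algebra_simps)
lemma gscale_diff_left: "(c - d) \<cdot>\<^sub>G x = c \<cdot>\<^sub>G x - d \<cdot>\<^sub>G x"
  by (auto simp: gscale_def fun_eq_iff algebra_simps)
lemma gscale_assoc: "c \<cdot>\<^sub>G (d \<cdot>\<^sub>G x) = (c * d) \<cdot>\<^sub>G x"
  by (auto simp: gscale_def fun_eq_iff algebra_simps)
lemma gscale_one[simp]: "1 \<cdot>\<^sub>G x = x"
  by (auto simp: gscale_def fun_eq_iff)
lemma gscale_zero[simp]: "0 \<cdot>\<^sub>G x = 0"
  by (auto simp: gscale_def fun_eq_iff)
lemma gscale_zero_right[simp]: "c \<cdot>\<^sub>G 0 = 0"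
  by (auto simp: gscale_def fun_eq_iff)
lemma gscale_neg_left: "(- c) \<cdot>\<^sub>G x = - (c \<cdot>\<^sub>G x)"
  by (auto simp: gscale_def fun_eq_iff)
lemma gscale_neg_right: "c \<cdot>\<^sub>G (- x) = - (c \<cdot>\<^sub>G x)"
  by (auto simp: gscale_def fun_eq_iff)
lemma gscale_minus1[simp]: "(-1) \<cdot>\<^sub>G x = - x"
  by (auto simp: gscale_def fun_eq_iff)
lemma gscale_sum_right: "c \<cdot>\<^sub>G (\<Sum>i\<in>I. f i) = (\<Sum>i\<in>I. c \<cdot>\<^sub>G f i)"
proof (induction I rule: infinite_finite_induct)
  case (insert a F)
  show ?case by (simp only: sum.insert[OF insert.hyps] gscale_add_right insert.IH)
qed (simp_all only: sum.infinite sum.empty not_False_eq_True gscale_zero_right gscale_zero)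
lemma gscale_sum_left: "(\<Sum>i\<in>I. f i) \<cdot>\<^sub>G x = (\<Sum>i\<in>I. f i \<cdot>\<^sub>G x)"
proof (induction I rule: infinite_finite_induct)
  case (insert a F)
  show ?case by (simp only: sum.insert[OF insert.hyps] gscale_add_left insert.IH)
qed (simp_all only: sum.infinite sum.empty not_False_eq_True gscale_zero_right gscale_zero)

lemma gmul_add_left: "(x + y) \<odot> z = x \<odot> z + y \<odot> z"
  by (auto simp: gmul_def fun_eq_iff algebra_simps sum.distrib)
lemma gmul_add_right: "z \<odot> (x + y) = z \<odot> x + z \<odot> y"
  by (auto simp: gmul_def fun_eq_iff algebra_simps sum.distrib)
lemma gmul_zero_left[simp]: "0 \<odot> z = 0"
  by (auto simp: gmul_def fun_eq_iff)
lemma gmul_zero_right[simp]: "z \<odot> 0 = 0"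
  by (auto simp: gmul_def fun_eq_iff)
lemma gmul_neg_left: "(- x) \<odot> z = - (x \<odot> z)"
  by (auto simp: gmul_def fun_eq_iff sum_negf)
lemma gmul_neg_right: "z \<odot> (- x) = - (z \<odot> x)"
  by (auto simp: gmul_def fun_eq_iff sum_negf)
lemma gmul_scale_left: "(c \<cdot>\<^sub>G x) \<odot> z = c \<cdot>\<^sub>G (x \<odot> z)"
  by (auto simp: gmul_def gscale_def fun_eq_iff sum_distrib_left algebra_simps)
lemma gmul_scale_right: "z \<odot> (c \<cdot>\<^sub>G x) = c \<cdot>\<^sub>G (z \<odot> x)"
  by (auto simp: gmul_def gscale_def fun_eq_iff sum_distrib_left algebra_simps)
lemma gmul_sum_left: "(\<Sum>i\<in>I. f i) \<odot> z = (\<Sum>i\<in>I. f i \<odot> z)"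
proof (induction I rule: infinite_finite_induct)
  case (insert a F)
  show ?case by (simp only: sum.insert[OF insert.hyps] gmul_add_left insert.IH)
qed (simp_all only: sum.infinite sum.empty not_False_eq_True gscale_zero_right gscale_zero gmul_zero_left gmul_zero_right)
lemma gmul_sum_right: "z \<odot> (\<Sum>i\<in>I. f i) = (\<Sum>i\<in>I. z \<odot> f i)"
proof (induction I rule: infinite_finite_induct)
  case (insert a F)
  show ?case by (simp only: sum.insert[OF insert.hyps] gmul_add_right insert.IH)
qed (simp_all only: sum.infinite sum.empty not_False_eq_True gscale_zero_right gscale_zero gmul_zero_left gmul_zero_right)

definition ginv :: "nat set \<Rightarrow> nat set \<Rightarrow> nat" where
  "ginv T U = card {(i, j). i \<in> T \<and> j \<in> U \<and> j < i}"

lemma gsign_inv: "gsign T U = (-1) ^ ginv T U"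
  by (simp add: gsign_def ginv_def)

lemma ginv_un_left:
  assumes "finite T" "finite T'" "finite U" "T \<inter> T' = {}"
  shows "ginv (T \<union> T') U = ginv T U + ginv T' U"
proof -
  have "{(i, j). i \<in> T \<union> T' \<and> j \<in> U \<and> j < i} =
        {(i, j). i \<in> T \<and> j \<in> U \<and> j < i} \<union> {(i, j). i \<in> T' \<and> j \<in> U \<and> j < i}" by auto
  moreover have "finite {(i, j). i \<in> T \<and> j \<in> U \<and> j < i}"
    by (rule finite_subset[of _ "T \<times> U"]) (use assms in auto)
  moreover have "finite {(i, j). i \<in> T' \<and> j \<in> U \<and> j < i}"
    by (rule finite_subset[of _ "T' \<times> U"]) (use assms in auto)
  moreover have "{(i, j). i \<in> T \<and> j \<in> U \<and> j < i} \<inter> {(i, j). i \<in> T' \<and> j \<in> U \<and> j < i} = {}"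
    using assms(4) by auto
  ultimately show ?thesis unfolding ginv_def
    by (simp only: card_Un_disjoint)
qed

lemma ginv_un_right:
  assumes "finite T" "finite U" "finite U'" "U \<inter> U' = {}"
  shows "ginv T (U \<union> U') = ginv T U + ginv T U'"
proof -
  have "{(i, j). i \<in> T \<and> j \<in> U \<union> U' \<and> j < i} =
        {(i, j). i \<in> T \<and> j \<in> U \<and> j < i} \<union> {(i, j). i \<in> T \<and> j \<in> U' \<and> j < i}" by auto
  moreover have "finite {(i, j). i \<in> T \<and> j \<in> U \<and> j < i}"
    by (rule finite_subset[of _ "T \<times> U"]) (use assms in auto)
  moreover have "finite {(i, j). i \<in> T \<and> j \<in> U' \<and> j < i}"
    by (rule finite_subset[of _ "T \<times> U'"]) (use assms in auto)
  moreover have "{(i, j). i \<in> T \<and> j \<in> U \<and> j < i} \<inter> {(i, j). i \<in> T \<and> j \<in> U' \<and> j < i} = {}"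
    using assms(4) by auto
  ultimately show ?thesis unfolding ginv_def
    by (simp only: card_Un_disjoint)
qed

lemma sum_pow_swap:
  assumes "finite S"
  shows "(\<Sum>T\<in>Pow S. \<Sum>U\<in>Pow T. f U T) = (\<Sum>U\<in>Pow S. \<Sum>V\<in>Pow (S - U). f U (U \<union> V))"
proof -
  have "(\<Sum>T\<in>Pow S. \<Sum>U\<in>Pow T. f U T) = (\<Sum>T\<in>Pow S. \<Sum>U\<in>{U\<in>Pow S. U \<subseteq> T}. f U T)"
    by (rule sum.cong) (auto intro!: sum.cong)
  also have "\<dots> = (\<Sum>U\<in>Pow S. \<Sum>T\<in>{T\<in>Pow S. U \<subseteq> T}. f U T)"
    by (rule sum.swap_restrict) (use assms in auto)
  also have "\<dots> = (\<Sum>U\<in>Pow S. \<Sum>V\<in>Pow (S - U). f U (U \<union> V))"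
  proof (rule sum.cong[OF refl])
    fix U assume U: "U \<in> Pow S"
    have "bij_betw (\<lambda>V. U \<union> V) (Pow (S - U)) {T\<in>Pow S. U \<subseteq> T}"
      by (rule bij_betw_byWitness[where f' = "\<lambda>T. T - U"]) (use U in auto)
    then show "(\<Sum>T\<in>{T\<in>Pow S. U \<subseteq> T}. f U T) = (\<Sum>V\<in>Pow (S - U). f U (U \<union> V))"
      by (simp add: sum.reindex_bij_betw)
  qed
  finally show ?thesis .
qed

lemma gmul_assoc: "(x \<odot> y) \<odot> z = x \<odot> (y \<odot> z)"
proof (rule ext)
  fix S :: "nat set"
  show "((x \<odot> y) \<odot> z) S = (x \<odot> (y \<odot> z)) S"
  proof (cases "finite S")
    case False then show ?thesis by (simp add: gmul_def)
  next
    case fin: True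
    have "((x \<odot> y) \<odot> z) S = (\<Sum>T\<in>Pow S. \<Sum>U\<in>Pow T.
            gsign T (S - T) * gsign U (T - U) * x U * y (T - U) * z (S - T))"
      unfolding gmul_def using fin
      by (auto simp: sum_distrib_left sum_distrib_right algebra_simps finite_subset intro!: sum.cong)
    also have "\<dots> = (\<Sum>U\<in>Pow S. \<Sum>V\<in>Pow (S - U).
            gsign (U \<union> V) (S - (U \<union> V)) * gsign U ((U \<union> V) - U) * x U * y ((U \<union> V) - U) * z (S - (U \<union> V)))"
      by (rule sum_pow_swap[OF fin])
    also have "\<dots> = (\<Sum>U\<in>Pow S. \<Sum>V\<in>Pow (S - U).
            gsign U (S - U) * gsign V (S - U - V) * x U * y V * z (S - U - V))"
    proof (intro sum.cong refl)
      fix U V assume U: "U \<in> Pow S" and V: "V \<in> Pow (S - U)"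
      have fU: "finite U" and fV: "finite V" using U V fin by (auto intro: finite_subset)
      have d: "U \<inter> V = {}" using V by auto
      have e1: "U \<union> V - U = V" using d by auto
      have e2: "S - (U \<union> V) = S - U - V" by auto
      have fW: "finite (S - U - V)" using fin by auto
      have s1: "ginv (U \<union> V) (S - U - V) = ginv U (S - U - V) + ginv V (S - U - V)"
        by (rule ginv_un_left) (use fU fV fW d in auto)
      have "S - U = V \<union> (S - U - V)" using V by auto
      then have s2: "ginv U (S - U) = ginv U V + ginv U (S - U - V)"
        using ginv_un_right[of U V "S - U - V"] fU fV fW by auto
      show "gsign (U \<union> V) (S - (U \<union> V)) * gsign U (U \<union> V - U) * x U * y (U \<union> V - U) * z (S - (U \<union> V)) =
            gsign U (S - U) * gsign V (S - U - V) * x U * y V * z (S - U - V)"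
        unfolding e1 e2 gsign_inv s1 s2 by (simp add: power_add algebra_simps)
    qed
    also have "\<dots> = (x \<odot> (y \<odot> z)) S"
      unfolding gmul_def using fin
      by (auto simp: sum_distrib_left sum_distrib_right algebra_simps finite_subset Diff_Diff_Int intro!: sum.cong)
    finally show ?thesis .
  qed
qed

lemma gsign_single: "gsign {i} {j} = (if j < i then -1 else 1)"
proof -
  have "{(a, b). a \<in> {i} \<and> b \<in> {j} \<and> b < a} = (if j < i then {(i, j)} else {})" by auto
  then show ?thesis by (simp add: gsign_def)
qed

lemma gen_mul: "gen i \<odot> gen j = (\<lambda>S. if S = {i, j} \<and> i \<noteq> j then (if j < i then -1 else 1) else 0)"
proof (rule ext)
  fix S :: "nat set"
  show "(gen i \<odot> gen j) S = (if S = {i, j} \<and> i \<noteq> j then (if j < i then -1 else 1) else 0)"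
  proof (cases "finite S")
    case False
    then show ?thesis by (auto simp: gmul_def)
  next
    case True
    have "(gen i \<odot> gen j) S = (\<Sum>T\<in>Pow S. if T = {i} then gsign {i} (S - {i}) * gen j (S - {i}) else 0)"
      unfolding gmul_def using True by (simp only: if_True) (rule sum.cong[OF refl], simp add: gen_def)
    also have "\<dots> = (if i \<in> S then gsign {i} (S - {i}) * gen j (S - {i}) else 0)"
      using True by (simp add: sum.delta)
    also have "\<dots> = (if S = {i, j} \<and> i \<noteq> j then (if j < i then -1 else 1) else 0)"
    proof (cases "i \<in> S \<and> S - {i} = {j}")
      case True
      then have "S = {i, j}" "i \<noteq> j" by auto
      then show ?thesis using True by (simp add: gen_def gsign_single)
    next
      case False
      then have "\<not> (S = {i, j} \<and> i \<noteq> j)" by auto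
      then show ?thesis using False by (auto simp: gen_def)
    qed
    finally show ?thesis .
  qed
qed

lemma gen_ac: "gen i \<odot> gen j = - (gen j \<odot> gen i)"
proof -
  have "{j, i} = {i, j}" by auto
  then show ?thesis unfolding gen_mul fun_eq_iff uminus_apply by (auto simp del: insert_commute)
qed

lemma sum3: "(\<Sum>i<3::nat. f i) = f 0 + f 1 + f 2"
  by (simp add: eval_nat_numeral)
lemma sum4: "(\<Sum>i<4::nat. f i) = f 0 + f 1 + f 2 + f 3"
  by (simp add: eval_nat_numeral)

definition isgen :: "grass \<Rightarrow> bool" where "isgen x = (\<exists>k. x = gen k)"

lemma isgen_ac: "isgen x \<Longrightarrow> isgen y \<Longrightarrow> x \<odot> y = - (y \<odot> x)"
  unfolding isgen_def using gen_ac by blast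

lemma isgen_psi[simp]: "isgen (psi a A)" by (auto simp: isgen_def psi_def)
lemma isgen_psib[simp]: "isgen (psib a A)" by (auto simp: isgen_def psib_def)

lemma levi_vals:
  "levi 0 0 0 = 0" "levi 0 0 1 = 0" "levi 0 0 2 = 0" "levi 0 1 0 = 0" "levi 0 1 1 = 0" "levi 0 1 2 = 1"
  "levi 0 2 0 = 0" "levi 0 2 1 = -1" "levi 0 2 2 = 0"
  "levi 1 0 0 = 0" "levi 1 0 1 = 0" "levi 1 0 2 = -1" "levi 1 1 0 = 0" "levi 1 1 1 = 0" "levi 1 1 2 = 0"
  "levi 1 2 0 = 1" "levi 1 2 1 = 0" "levi 1 2 2 = 0"
  "levi 2 0 0 = 0" "levi 2 0 1 = 1" "levi 2 0 2 = 0" "levi 2 1 0 = -1" "levi 2 1 1 = 0" "levi 2 1 2 = 0"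
  "levi 2 2 0 = 0" "levi 2 2 1 = 0" "levi 2 2 2 = 0"
  by (simp_all add: levi_def)

lemma gcol_vals: "gcol 0 0 = 1" "gcol 1 1 = 1" "gcol 2 2 = 1" "gcol 0 1 = 0" "gcol 0 2 = 0"
  "gcol 1 0 = 0" "gcol 1 2 = 0" "gcol 2 0 = 0" "gcol 2 1 = 0"
  by (simp_all add: gcol_def)

lemma less3_cases: "(A::nat) < 3 \<Longrightarrow> A = 0 \<or> A = 1 \<or> A = 2" by auto

definition Fg :: "(nat \<Rightarrow> nat \<Rightarrow> grass) \<Rightarrow> nat \<Rightarrow> nat \<Rightarrow> nat \<Rightarrow> grass" where
  "Fg u B m n = (\<Sum>A'<3. \<Sum>B'<3. levi A' B' B \<cdot>\<^sub>G (u m A' \<odot> u n B'))"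
definition Sg :: "(nat \<Rightarrow> nat \<Rightarrow> grass) \<Rightarrow> nat \<Rightarrow> nat \<Rightarrow> grass" where
  "Sg u A B = u 0 A \<odot> Fg u B 1 2 + u 1 A \<odot> Fg u B 2 0 + u 2 A \<odot> Fg u B 0 1"
definition Og :: "(nat \<Rightarrow> nat \<Rightarrow> grass) \<Rightarrow> grass" where
  "Og u = (\<Sum>D<3. \<Sum>E<3. \<Sum>F<3. levi D E F \<cdot>\<^sub>G (u 0 D \<odot> u 1 E \<odot> u 2 F))"

lemma gmul_diff_left: "(x - y) \<odot> z = x \<odot> z - y \<odot> z"
  by (simp only: diff_conv_add_uminus gmul_add_left gmul_neg_left)
lemma gmul_diff_right: "z \<odot> (x - y) = z \<odot> x - z \<odot> y"
  by (simp only: diff_conv_add_uminus gmul_add_right gmul_neg_right)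

lemmas gnorm = gmul_diff_left gmul_diff_right gmul_assoc gmul_neg_left gmul_neg_right gmul_scale_left gmul_scale_right
  gmul_add_left gmul_add_right gscale_add_right gscale_neg_right gscale_assoc
  gmul_sum_left gmul_sum_right gscale_sum_right

lemma R2gen:
  assumes g: "\<And>l D. isgen (u l D)" and AB: "A < 3" "B < 3"
  shows "Sg u A B = gcol A B \<cdot>\<^sub>G Og u"
proof -
  have sw1: "u l D \<odot> u l' E = - (u l' E \<odot> u l D)" if "l' < l" for l l' D E
    using isgen_ac[OF g g] .
  have sw2: "u l D \<odot> (u l' E \<odot> X) = - (u l' E \<odot> (u l D \<odot> X))" if "l' < l" for l l' D E X
    by (metis gmul_assoc gmul_neg_left isgen_ac[OF g g])
  show ?thesis
    using less3_cases[OF AB(1)] less3_cases[OF AB(2)]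
    by (elim disjE) (simp_all add: Sg_def Fg_def Og_def sum3 levi_def gcol_def gnorm sw1 sw2 algebra_simps)
qed

lemma gen_sw: "isgen x \<Longrightarrow> isgen y \<Longrightarrow> x \<odot> (y \<odot> Z) = - (y \<odot> (x \<odot> Z))"
  by (metis gmul_assoc gmul_neg_left isgen_ac)

lemma reorder6:
  assumes "isgen a1" "isgen a2" "isgen a3" "isgen b1" "isgen b2" "isgen b3"
  shows "((a1 \<odot> b1) \<odot> (a2 \<odot> b2)) \<odot> (a3 \<odot> b3) = - (((a1 \<odot> a2) \<odot> a3) \<odot> ((b1 \<odot> b2) \<odot> b3))"
proof -
  have "b2 \<odot> (a3 \<odot> b3) = - (a3 \<odot> (b2 \<odot> b3))" by (rule gen_sw) (use assms in auto)
  moreover have "b1 \<odot> (a2 \<odot> Z) = - (a2 \<odot> (b1 \<odot> Z))" for Z by (rule gen_sw) (use assms in auto)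
  moreover have "b1 \<odot> (a3 \<odot> Z) = - (a3 \<odot> (b1 \<odot> Z))" for Z by (rule gen_sw) (use assms in auto)
  ultimately show ?thesis by (simp add: gmul_assoc gmul_neg_right gmul_neg_left)
qed

definition sigV :: "(nat \<Rightarrow> nat \<Rightarrow> grass) \<Rightarrow> nat \<Rightarrow> nat \<Rightarrow> nat \<Rightarrow> grass" where
  "sigV u C1 C2 C3 =
     (u 0 C1 \<odot> u 1 C2) \<odot> u 2 C3 + (u 1 C1 \<odot> u 2 C2) \<odot> u 0 C3 + (u 2 C1 \<odot> u 0 C2) \<odot> u 1 C3
   + (u 0 C1 \<odot> u 2 C2) \<odot> u 1 C3 + (u 2 C1 \<odot> u 1 C2) \<odot> u 0 C3 + (u 1 C1 \<odot> u 0 C2) \<odot> u 2 C3"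

lemma R3b:
  assumes g: "\<And>l D. isgen (u l D)" and C: "C1 < 3" "C2 < 3" "C3 < 3"
  shows "sigV u C1 C2 C3 = levi C1 C2 C3 \<cdot>\<^sub>G Og u"
proof -
  have sw1: "u l D \<odot> u l' E = - (u l' E \<odot> u l D)" if "l' < l" for l l' D E
    using isgen_ac[OF g g] .
  have sw2: "u l D \<odot> (u l' E \<odot> X) = - (u l' E \<odot> (u l D \<odot> X))" if "l' < l" for l l' D E X
    by (metis gmul_assoc gmul_neg_left isgen_ac[OF g g])
  show ?thesis
    using less3_cases[OF C(1)] less3_cases[OF C(2)] less3_cases[OF C(3)]
    by (elim disjE) (simp_all add: sigV_def Og_def sum3 levi_def gnorm sw1 sw2 algebra_simps)
qed

lemma levi_rev:
  "(\<Sum>C<3. \<Sum>G<3. \<Sum>H<3. levi C G H \<cdot>\<^sub>G W H G C) =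
   - (\<Sum>C1<3. \<Sum>C2<3. \<Sum>C3<3. levi C1 C2 C3 \<cdot>\<^sub>G W C1 C2 C3)"
  by (simp add: sum3 levi_def algebra_simps)

definition pp :: "nat \<Rightarrow> nat" where "pp a = (a + 2) mod 4"
definition opp :: "nat \<Rightarrow> nat \<Rightarrow> bool" where "opp b c = ((b < 2) \<noteq> (c < 2))"
definition chi :: "nat \<Rightarrow> nat \<Rightarrow> grass" where "chi y D = psi (pp y) D"
definition sel :: "nat \<Rightarrow> nat \<Rightarrow> nat \<Rightarrow> nat \<Rightarrow> nat" where
  "sel y1 y2 y3 l = (if l = 0 then y1 else if l = 1 then y2 else y3)"
definition Eb :: "nat \<Rightarrow> nat \<Rightarrow> nat \<Rightarrow> grass" where
  "Eb x1 x2 x3 = (\<Sum>C<3. \<Sum>G<3. \<Sum>H<3. levi C G H \<cdot>\<^sub>G (psib x1 H \<odot> psib x2 G \<odot> psib x3 C))"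
definition Om :: "nat \<Rightarrow> nat \<Rightarrow> nat \<Rightarrow> grass" where
  "Om y1 y2 y3 = Og (\<lambda>l D. chi (sel y1 y2 y3 l) D)"
definition JJ :: "nat \<Rightarrow> nat \<Rightarrow> nat \<Rightarrow> nat \<Rightarrow> nat \<Rightarrow> nat \<Rightarrow> grass" where
  "JJ a1 b1 a2 b2 a3 b3 = Jc a1 b1 \<odot> Jc a2 b2 \<odot> Jc a3 b3"
definition perm3 :: "nat \<Rightarrow> nat \<Rightarrow> nat \<Rightarrow> nat \<Rightarrow> nat \<Rightarrow> nat \<Rightarrow> grass" where
  "perm3 x1 x2 x3 y1 y2 y3 =
     JJ x1 (pp y1) x2 (pp y2) x3 (pp y3) + JJ x1 (pp y2) x2 (pp y3) x3 (pp y1)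
   + JJ x1 (pp y3) x2 (pp y1) x3 (pp y2) + JJ x1 (pp y1) x2 (pp y3) x3 (pp y2)
   + JJ x1 (pp y3) x2 (pp y2) x3 (pp y1) + JJ x1 (pp y2) x2 (pp y1) x3 (pp y3)"

lemma gcol_sum: "A < 3 \<Longrightarrow> (\<Sum>B<3. gcol A B \<cdot>\<^sub>G f B) = f A"
  using less3_cases[of A] by (auto simp: gcol_def sum3)

lemma Jc_eq: "Jc a b = (\<Sum>C<3. psib a C \<odot> psi b C)"
  unfolding Jc_def by (rule sum.cong[OF refl]) (simp add: gcol_sum gmul_scale_right)

lemma gmul_sum_sum: "(\<Sum>i\<in>I. f i) \<odot> (\<Sum>j\<in>J. g j) = (\<Sum>i\<in>I. \<Sum>j\<in>J. f i \<odot> g j)"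
  by (simp only: gmul_sum_left) (simp only: gmul_sum_right)

lemma JJ_eq: "JJ a1 b1 a2 b2 a3 b3 = (\<Sum>C1<3. \<Sum>C2<3. \<Sum>C3<3.
   - (((psib a1 C1 \<odot> psib a2 C2) \<odot> psib a3 C3) \<odot> ((psi b1 C1 \<odot> psi b2 C2) \<odot> psi b3 C3)))"
proof -
  have "JJ a1 b1 a2 b2 a3 b3 = (\<Sum>C1<3. \<Sum>C2<3. psib a1 C1 \<odot> psi b1 C1 \<odot> (psib a2 C2 \<odot> psi b2 C2)) \<odot> Jc a3 b3"
    unfolding JJ_def Jc_eq gmul_sum_sum ..
  also have "\<dots> = (\<Sum>C1<3. \<Sum>C2<3. \<Sum>C3<3. psib a1 C1 \<odot> psi b1 C1 \<odot> (psib a2 C2 \<odot> psi b2 C2) \<odot> (psib a3 C3 \<odot> psi b3 C3))"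
    unfolding gmul_sum_left unfolding Jc_eq gmul_sum_right ..
  also have "\<dots> = (\<Sum>C1<3. \<Sum>C2<3. \<Sum>C3<3.
     - (((psib a1 C1 \<odot> psib a2 C2) \<odot> psib a3 C3) \<odot> ((psi b1 C1 \<odot> psi b2 C2) \<odot> psi b3 C3)))"
    by (simp only: reorder6 isgen_psi isgen_psib)
  finally show ?thesis .
qed

lemma isgen_chi[simp]: "isgen (chi y D)" by (simp add: chi_def)

lemma R3:
  "Eb x1 x2 x3 \<odot> Om y1 y2 y3 = perm3 x1 x2 x3 y1 y2 y3"
proof -
  define u where "u = (\<lambda>l D. chi (sel y1 y2 y3 l) D)"
  define U where "U = (\<lambda>C1 C2 C3. (psib x1 C1 \<odot> psib x2 C2) \<odot> psib x3 C3)"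
  have gu: "\<And>l D. isgen (u l D)" by (simp add: u_def)
  have Om: "Om y1 y2 y3 = Og u" by (simp add: Om_def u_def)
  have "perm3 x1 x2 x3 y1 y2 y3 = (\<Sum>C1<3. \<Sum>C2<3. \<Sum>C3<3. - (U C1 C2 C3 \<odot> sigV u C1 C2 C3))"
    unfolding perm3_def JJ_eq U_def u_def sigV_def
    by (simp add: chi_def sel_def gmul_add_right sum.distrib sum_subtractf sum_negf)
  also have "\<dots> = (\<Sum>C1<3. \<Sum>C2<3. \<Sum>C3<3. - (levi C1 C2 C3 \<cdot>\<^sub>G (U C1 C2 C3 \<odot> Om y1 y2 y3)))"
    by (intro sum.cong refl) (simp add: R3b[OF gu] Om gmul_scale_right)
  also have "\<dots> = Eb x1 x2 x3 \<odot> Om y1 y2 y3"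
    unfolding Eb_def gmul_sum_left gmul_scale_left U_def
    by (subst levi_rev) (simp add: sum_negf gscale_neg_right)
  finally show ?thesis by simp
qed

lemma less4_cases: "(a::nat) < 4 \<Longrightarrow> a = 0 \<or> a = 1 \<or> a = 2 \<or> a = 3" by auto

lemma gtab:
  "gammaDD 0 0 0 = 0"
  "gammaDD 0 0 (Suc 0) = 0"
  "gammaDD 0 0 2 = 0"
  "gammaDD 0 0 3 = -1"
  "gammaDD 0 (Suc 0) 0 = 0"
  "gammaDD 0 (Suc 0) (Suc 0) = 0"
  "gammaDD 0 (Suc 0) 2 = 1"
  "gammaDD 0 (Suc 0) 3 = 0"
  "gammaDD 0 2 0 = 0"
  "gammaDD 0 2 (Suc 0) = 1"
  "gammaDD 0 2 2 = 0"
  "gammaDD 0 2 3 = 0"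
  "gammaDD 0 3 0 = -1"
  "gammaDD 0 3 (Suc 0) = 0"
  "gammaDD 0 3 2 = 0"
  "gammaDD 0 3 3 = 0"
  "gammaDD (Suc 0) 0 0 = 0"
  "gammaDD (Suc 0) 0 (Suc 0) = 0"
  "gammaDD (Suc 0) 0 2 = 1"
  "gammaDD (Suc 0) 0 3 = 0"
  "gammaDD (Suc 0) (Suc 0) 0 = 0"
  "gammaDD (Suc 0) (Suc 0) (Suc 0) = 0"
  "gammaDD (Suc 0) (Suc 0) 2 = 0"
  "gammaDD (Suc 0) (Suc 0) 3 = -1"
  "gammaDD (Suc 0) 2 0 = 1"
  "gammaDD (Suc 0) 2 (Suc 0) = 0"
  "gammaDD (Suc 0) 2 2 = 0"
  "gammaDD (Suc 0) 2 3 = 0"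
  "gammaDD (Suc 0) 3 0 = 0"
  "gammaDD (Suc 0) 3 (Suc 0) = -1"
  "gammaDD (Suc 0) 3 2 = 0"
  "gammaDD (Suc 0) 3 3 = 0"
  "gammaDD 2 0 0 = 0"
  "gammaDD 2 0 (Suc 0) = 0"
  "gammaDD 2 0 2 = \<i>"
  "gammaDD 2 0 3 = 0"
  "gammaDD 2 (Suc 0) 0 = 0"
  "gammaDD 2 (Suc 0) (Suc 0) = 0"
  "gammaDD 2 (Suc 0) 2 = 0"
  "gammaDD 2 (Suc 0) 3 = \<i>"
  "gammaDD 2 2 0 = \<i>"
  "gammaDD 2 2 (Suc 0) = 0"
  "gammaDD 2 2 2 = 0"
  "gammaDD 2 2 3 = 0"
  "gammaDD 2 3 0 = 0"
  "gammaDD 2 3 (Suc 0) = \<i>"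
  "gammaDD 2 3 2 = 0"
  "gammaDD 2 3 3 = 0"
  "gammaDD 3 0 0 = 0"
  "gammaDD 3 0 (Suc 0) = 0"
  "gammaDD 3 0 2 = 0"
  "gammaDD 3 0 3 = -1"
  "gammaDD 3 (Suc 0) 0 = 0"
  "gammaDD 3 (Suc 0) (Suc 0) = 0"
  "gammaDD 3 (Suc 0) 2 = -1"
  "gammaDD 3 (Suc 0) 3 = 0"
  "gammaDD 3 2 0 = 0"
  "gammaDD 3 2 (Suc 0) = -1"
  "gammaDD 3 2 2 = 0"
  "gammaDD 3 2 3 = 0"
  "gammaDD 3 3 0 = -1"
  "gammaDD 3 3 (Suc 0) = 0"
  "gammaDD 3 3 2 = 0"
  "gammaDD 3 3 3 = 0"
  by (simp_all add: gammaDD_def sum4 gammaUD_def sigma_def sigmat_def pauli_def eps4_def eps2_def)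

lemma beta4_eq:
  assumes "g < 4" "h < 4" "f < 4" "d < 4"
  shows "beta4 g h f d = (if opp g h then - ((if f = pp g \<and> d = pp h then 1 else 0) + (if f = pp h \<and> d = pp g then 1 else 0)) else 0)"
    using less4_cases[OF assms(1)] less4_cases[OF assms(2)] less4_cases[OF assms(3)] less4_cases[OF assms(4)]
    by (elim disjE) (simp_all add: beta4_def gammaLDD_def sum4 eta_def gtab opp_def pp_def)

lemma beta2_eq: "a < 4 \<Longrightarrow> beta2 a b = (if b = pp a then 1 else 0)"
  using less4_cases[of a] by (auto simp: beta2_def pp_def)

lemma cnj_levi[simp]: "cnj (levi a b c) = levi a b c"
  by (simp add: levi_def)

lemma levi_swap12: "levi b a c = - levi a b c"
  by (auto simp: levi_def)

lemma Vc_sym: "Vc B e f = Vc B f e"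
proof -
  have pw: "levi A' B' B \<cdot>\<^sub>G (psi f A' \<odot> psi e B') = levi B' A' B \<cdot>\<^sub>G (psi e B' \<odot> psi f A')" for A' B'
  proof -
    have "psi f A' \<odot> psi e B' = - (psi e B' \<odot> psi f A')" by (rule isgen_ac) simp_all
    moreover have "levi A' B' B = - levi B' A' B" by (rule levi_swap12)
    ultimately show ?thesis by (simp add: gscale_neg_left gscale_neg_right)
  qed
  have "Vc B f e = (\<Sum>A<3. \<Sum>B'<3. levi A B' B \<cdot>\<^sub>G (psi f A \<odot> psi e B'))" by (simp add: Vc_def)
  also have "\<dots> = (\<Sum>A<3. \<Sum>B'<3. levi B' A B \<cdot>\<^sub>G (psi e B' \<odot> psi f A))" by (simp only: pw)
  also have "\<dots> = (\<Sum>B'<3. \<Sum>A<3. levi B' A B \<cdot>\<^sub>G (psi e B' \<odot> psi f A))" by (rule sum.swap)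
  also have "\<dots> = Vc B e f" by (simp add: Vc_def)
  finally show ?thesis ..
qed

lemma even_comm:
  assumes "isgen p" "isgen q" "isgen r" "isgen s"
  shows "(p \<odot> q) \<odot> (r \<odot> s) = (r \<odot> s) \<odot> (p \<odot> q)"
proof -
  have "q \<odot> (r \<odot> s) = - (r \<odot> (q \<odot> s))" by (rule gen_sw) (use assms in auto)
  moreover have "q \<odot> s = - (s \<odot> q)" by (rule isgen_ac) (use assms in auto)
  moreover have "p \<odot> (r \<odot> Z) = - (r \<odot> (p \<odot> Z))" for Z by (rule gen_sw) (use assms in auto)
  moreover have "p \<odot> (s \<odot> Z) = - (s \<odot> (p \<odot> Z))" for Z by (rule gen_sw) (use assms in auto)
  ultimately show ?thesis by (simp add: gmul_assoc gmul_neg_right gmul_neg_left)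
qed

lemma Jc_comm: "Jc a b \<odot> Jc c d = Jc c d \<odot> Jc a b"
proof -
  have "Jc a b \<odot> Jc c d = (\<Sum>C<3. \<Sum>D<3. (psib a C \<odot> psi b C) \<odot> (psib c D \<odot> psi d D))"
    unfolding Jc_eq gmul_sum_sum ..
  also have "\<dots> = (\<Sum>D<3. \<Sum>C<3. (psib a C \<odot> psi b C) \<odot> (psib c D \<odot> psi d D))" by (rule sum.swap)
  also have "\<dots> = Jc c d \<odot> Jc a b"
    unfolding Jc_eq gmul_sum_sum by (intro sum.cong refl) (simp add: even_comm)
  finally show ?thesis .
qed

lemma Jc_lcomm: "Jc a b \<odot> (Jc c d \<odot> X) = Jc c d \<odot> (Jc a b \<odot> X)"
  by (metis Jc_comm gmul_assoc)

lemma gscale_if: "(if P then a else 0) \<cdot>\<^sub>G Y = (if P then a \<cdot>\<^sub>G Y else 0)"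
  by simp

lemma pp_less[simp]: "pp x < 4" by (simp add: pp_def)

lemma delta1: "(t::nat) < 4 \<Longrightarrow> (\<Sum>x<4. if x = t then F x else 0) = F t"
  by (simp add: sum.delta)

lemma delta_outer: "(t::nat) < 4 \<Longrightarrow> (\<Sum>x<4. \<Sum>y<4. (if x = t then k x y else 0) \<cdot>\<^sub>G Z x y) = (\<Sum>y<4. k t y \<cdot>\<^sub>G Z t y)"
proof -
  assume t: "t < 4"
  have "(\<Sum>x<4. \<Sum>y<4. (if x = t then k x y else 0) \<cdot>\<^sub>G Z x y) = (\<Sum>x<4. if x = t then (\<Sum>y<4. k x y \<cdot>\<^sub>G Z x y) else 0)"
    by (rule sum.cong) auto
  also have "\<dots> = (\<Sum>y<4. k t y \<cdot>\<^sub>G Z t y)" using t by (simp only: delta1)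
  finally show ?thesis .
qed

lemma delta_outer3: "(t::nat) < 4 \<Longrightarrow> (\<Sum>d<4. \<Sum>e<4. \<Sum>f<4. (if d = t then k d e f else 0) \<cdot>\<^sub>G Z d e f) = (\<Sum>e<4. \<Sum>f<4. k t e f \<cdot>\<^sub>G Z t e f)"
proof -
  assume t: "t < 4"
  have "(\<Sum>d<4. \<Sum>e<4. \<Sum>f<4. (if d = t then k d e f else 0) \<cdot>\<^sub>G Z d e f) = (\<Sum>d<4. if d = t then (\<Sum>e<4. \<Sum>f<4. k d e f \<cdot>\<^sub>G Z d e f) else 0)"
    by (rule sum.cong) auto
  also have "\<dots> = (\<Sum>e<4. \<Sum>f<4. k t e f \<cdot>\<^sub>G Z t e f)" using t by (simp only: delta1)
  finally show ?thesis .
qed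

lemma delta_mid: "(t::nat) < 4 \<Longrightarrow> (\<Sum>d<4. \<Sum>e<4. \<Sum>f<4. (if e = t then k d e f else 0) \<cdot>\<^sub>G Z d e f) = (\<Sum>d<4. \<Sum>f<4. k d t f \<cdot>\<^sub>G Z d t f)"
  by (rule sum.cong[OF refl]) (rule delta_outer)

lemma delta_2a: "(t::nat) < 4 \<Longrightarrow> (s::nat) < 4 \<Longrightarrow> (\<Sum>x<4. \<Sum>y<4. (if y = s \<and> x = t then k else 0) \<cdot>\<^sub>G Z x y) = k \<cdot>\<^sub>G Z t s"
proof -
  assume ts: "t < 4" "s < 4"
  have "(\<Sum>x<4. \<Sum>y<4. (if y = s \<and> x = t then k else 0) \<cdot>\<^sub>G Z x y) = (\<Sum>x<4. \<Sum>y<4. (if x = t then (if y = s then k else 0) else 0) \<cdot>\<^sub>G Z x y)"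
    by (intro sum.cong refl) auto
  also have "\<dots> = (\<Sum>y<4. (if y = s then k else 0) \<cdot>\<^sub>G Z t y)" using ts(1) by (rule delta_outer)
  also have "\<dots> = k \<cdot>\<^sub>G Z t s" using ts by (simp add: gscale_if delta1)
  finally show ?thesis .
qed

lemma delta_2b: "(t::nat) < 4 \<Longrightarrow> (s::nat) < 4 \<Longrightarrow> (\<Sum>x<4. \<Sum>y<4. (if x = t \<and> y = s then k else 0) \<cdot>\<^sub>G Z x y) = k \<cdot>\<^sub>G Z t s"
  using delta_2a[of t s k Z] by (simp add: conj_commute)

lemma sum2_add: "(\<Sum>x<4::nat. \<Sum>y<4. (a x y + b x y) \<cdot>\<^sub>G Z x y) = (\<Sum>x<4. \<Sum>y<4. a x y \<cdot>\<^sub>G Z x y) + (\<Sum>x<4. \<Sum>y<4. b x y \<cdot>\<^sub>G Z x y)"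
  by (simp add: gscale_add_left sum.distrib)

lemma sum2_scale: "(\<Sum>x<4::nat. \<Sum>y<4. (k * a x y) \<cdot>\<^sub>G Z x y) = k \<cdot>\<^sub>G (\<Sum>x<4. \<Sum>y<4. a x y \<cdot>\<^sub>G Z x y)"
  by (simp add: gscale_sum_right gscale_assoc)

lemma sum2_neg: "(\<Sum>x<4::nat. \<Sum>y<4. (- a x y) \<cdot>\<^sub>G Z x y) = - (\<Sum>x<4. \<Sum>y<4. a x y \<cdot>\<^sub>G Z x y)"
  by (simp add: gscale_neg_left sum_negf)

lemma collapseL:
  assumes "a < 4" "b < 4" "c < 4"
  shows "(\<Sum>d<4. \<Sum>e<4. \<Sum>f<4. (beta4 b c e f * beta2 a d) \<cdot>\<^sub>G Z d e f) =
    (if opp b c then - (Z (pp a) (pp b) (pp c) + Z (pp a) (pp c) (pp b)) else 0)"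
proof -
  have "(\<Sum>d<4. \<Sum>e<4. \<Sum>f<4. (beta4 b c e f * beta2 a d) \<cdot>\<^sub>G Z d e f) =
        (\<Sum>d<4. \<Sum>e<4. \<Sum>f<4. (if d = pp a then beta4 b c e f else 0) \<cdot>\<^sub>G Z d e f)"
    using assms by (intro sum.cong refl) (simp add: beta2_eq)
  also have "\<dots> = (\<Sum>e<4. \<Sum>f<4. beta4 b c e f \<cdot>\<^sub>G Z (pp a) e f)"
    by (rule delta_outer3) simp
  also have "\<dots> = (\<Sum>e<4. \<Sum>f<4. (if opp b c then - ((if e = pp b \<and> f = pp c then 1 else 0) + (if e = pp c \<and> f = pp b then 1 else 0)) else 0) \<cdot>\<^sub>G Z (pp a) e f)"
    using assms by (intro sum.cong refl) (simp add: beta4_eq)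
  also have "\<dots> = (if opp b c then - (Z (pp a) (pp b) (pp c) + Z (pp a) (pp c) (pp b)) else 0)"
  proof (cases "opp b c")
    case True
    then show ?thesis by (simp only: if_True sum2_neg sum2_add delta_2b pp_less gscale_one)
  next
    case False
    then show ?thesis by simp
  qed
  finally show ?thesis .
qed

lemma collapseR:
  assumes "g < 4" "h < 4" "c < 4"
  shows "(\<Sum>d<4. \<Sum>e<4. \<Sum>f<4. (4 * beta2 c e * beta4 g h f d + 2 * beta2 c d * beta4 g h f e) \<cdot>\<^sub>G Y d e f) =
    (if opp g h then (-4) \<cdot>\<^sub>G (Y (pp h) (pp c) (pp g) + Y (pp g) (pp c) (pp h))
        + (-2) \<cdot>\<^sub>G (Y (pp c) (pp h) (pp g) + Y (pp c) (pp g) (pp h)) else 0)"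
proof -
  have split: "(\<Sum>d<4. \<Sum>e<4. \<Sum>f<4. (4 * beta2 c e * beta4 g h f d + 2 * beta2 c d * beta4 g h f e) \<cdot>\<^sub>G Y d e f) =
     (\<Sum>d<4. \<Sum>e<4. \<Sum>f<4. (4 * beta2 c e * beta4 g h f d) \<cdot>\<^sub>G Y d e f) +
     (\<Sum>d<4. \<Sum>e<4. \<Sum>f<4. (2 * beta2 c d * beta4 g h f e) \<cdot>\<^sub>G Y d e f)"
    by (simp add: gscale_add_left sum.distrib)
  have PA: "(\<Sum>d<4. \<Sum>e<4. \<Sum>f<4. (4 * beta2 c e * beta4 g h f d) \<cdot>\<^sub>G Y d e f) =
      (if opp g h then (-4) \<cdot>\<^sub>G (Y (pp h) (pp c) (pp g) + Y (pp g) (pp c) (pp h)) else 0)"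
  proof -
    have "(\<Sum>d<4. \<Sum>e<4. \<Sum>f<4. (4 * beta2 c e * beta4 g h f d) \<cdot>\<^sub>G Y d e f) =
          (\<Sum>d<4. \<Sum>e<4. \<Sum>f<4. (if e = pp c then 4 * beta4 g h f d else 0) \<cdot>\<^sub>G Y d e f)"
      using assms by (intro sum.cong refl) (simp add: beta2_eq)
    also have "\<dots> = (\<Sum>d<4. \<Sum>f<4. (4 * beta4 g h f d) \<cdot>\<^sub>G Y d (pp c) f)"
      by (rule delta_mid) simp
    also have "\<dots> = (\<Sum>d<4. \<Sum>f<4. (4 * (if opp g h then - ((if f = pp g \<and> d = pp h then 1 else 0) + (if f = pp h \<and> d = pp g then 1 else 0)) else 0)) \<cdot>\<^sub>G Y d (pp c) f)"
      using assms by (intro sum.cong refl) (simp add: beta4_eq)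
    also have "\<dots> = (if opp g h then (-4) \<cdot>\<^sub>G (Y (pp h) (pp c) (pp g) + Y (pp g) (pp c) (pp h)) else 0)"
    proof (cases "opp g h")
      case True
      then show ?thesis
        by (simp only: if_True sum2_scale sum2_neg sum2_add delta_2a pp_less gscale_one) (simp only: gscale_neg_left gscale_neg_right)
    next
      case False
      then show ?thesis by simp
    qed
    finally show ?thesis .
  qed
  have PB: "(\<Sum>d<4. \<Sum>e<4. \<Sum>f<4. (2 * beta2 c d * beta4 g h f e) \<cdot>\<^sub>G Y d e f) =
      (if opp g h then (-2) \<cdot>\<^sub>G (Y (pp c) (pp h) (pp g) + Y (pp c) (pp g) (pp h)) else 0)"
  proof -
    have "(\<Sum>d<4. \<Sum>e<4. \<Sum>f<4. (2 * beta2 c d * beta4 g h f e) \<cdot>\<^sub>G Y d e f) =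
          (\<Sum>d<4. \<Sum>e<4. \<Sum>f<4. (if d = pp c then 2 * beta4 g h f e else 0) \<cdot>\<^sub>G Y d e f)"
      using assms by (intro sum.cong refl) (simp add: beta2_eq)
    also have "\<dots> = (\<Sum>e<4. \<Sum>f<4. (2 * beta4 g h f e) \<cdot>\<^sub>G Y (pp c) e f)"
      by (rule delta_outer3) simp
    also have "\<dots> = (\<Sum>e<4. \<Sum>f<4. (2 * (if opp g h then - ((if f = pp g \<and> e = pp h then 1 else 0) + (if f = pp h \<and> e = pp g then 1 else 0)) else 0)) \<cdot>\<^sub>G Y (pp c) e f)"
      using assms by (intro sum.cong refl) (simp add: beta4_eq)
    also have "\<dots> = (if opp g h then (-2) \<cdot>\<^sub>G (Y (pp c) (pp h) (pp g) + Y (pp c) (pp g) (pp h)) else 0)"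
    proof (cases "opp g h")
      case True
      then show ?thesis
        by (simp only: if_True sum2_scale sum2_neg sum2_add delta_2a pp_less gscale_one) (simp only: gscale_neg_left gscale_neg_right)
    next
      case False
      then show ?thesis by simp
    qed
    finally show ?thesis .
  qed
  show ?thesis unfolding split PA PB by simp
qed

definition T1 where "T1 a b c = JJ a (pp a) b (pp b) c (pp c)"
definition T2 where "T2 a b c = JJ a (pp b) b (pp c) c (pp a)"
definition T3 where "T3 a b c = JJ a (pp a) b (pp c) c (pp b)"
definition T4 where "T4 a b c = JJ a (pp c) b (pp b) c (pp a)"

definition Q :: "nat \<Rightarrow> nat \<Rightarrow> nat \<Rightarrow> grass" where
  "Q a b c = (Jc a (pp a) \<odot> Jc b (pp b) \<odot> Jc c (pp c) + 2 \<cdot>\<^sub>G (Jc a (pp b) \<odot> Jc b (pp c) \<odot> Jc c (pp a)))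
           + (Jc a (pp a) \<odot> Jc b (pp c) \<odot> Jc c (pp b) + 2 \<cdot>\<^sub>G (Jc a (pp c) \<odot> Jc b (pp b) \<odot> Jc c (pp a)))"

lemma perm_eq: "perm3 c b a b c a = T3 a b c + T4 a c b + T4 a b c + T2 a c b + T2 a b c + T1 a b c"
  unfolding perm3_def T1_def T2_def T3_def T4_def JJ_def
  by (simp only: gmul_assoc Jc_comm Jc_lcomm)

lemma Q_eq: "Q a b c = T1 a b c + T2 a b c + T2 a b c + T3 a b c + T4 a b c + T4 a b c"
proof -
  have two: "\<And>x::grass. 2 \<cdot>\<^sub>G x = x + x" by (simp add: gscale_def fun_eq_iff)
  show ?thesis unfolding Q_def T1_def T2_def T3_def T4_def JJ_def two by (simp add: add_ac)
qed

lemma rot3: "(\<Sum>g<4::nat. \<Sum>h<4::nat. \<Sum>c<4::nat. F g h c) = (\<Sum>a<4. \<Sum>b<4. \<Sum>c<4. F b c a)"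
proof -
  have "(\<Sum>g<4::nat. \<Sum>h<4::nat. \<Sum>c<4::nat. F g h c) = (\<Sum>g<4::nat. \<Sum>c<4::nat. \<Sum>h<4::nat. F g h c)"
    by (rule sum.cong[OF refl]) (rule sum.swap)
  also have "\<dots> = (\<Sum>c<4::nat. \<Sum>g<4::nat. \<Sum>h<4::nat. F g h c)" by (rule sum.swap)
  finally show ?thesis .
qed

lemma opp_sym: "opp c b = opp b c" by (auto simp: opp_def)

lemma swap_inner: "(\<Sum>a<4::nat. \<Sum>b<4::nat. \<Sum>c<4::nat. (if opp b c then k else 0) \<cdot>\<^sub>G F a c b) =
   (\<Sum>a<4::nat. \<Sum>b<4::nat. \<Sum>c<4::nat. (if opp b c then k else 0) \<cdot>\<^sub>G F a b c)"
proof (rule sum.cong[OF refl])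
  fix a
  have "(\<Sum>b<4::nat. \<Sum>c<4::nat. (if opp b c then k else 0) \<cdot>\<^sub>G F a c b) =
        (\<Sum>c<4::nat. \<Sum>b<4::nat. (if opp b c then k else 0) \<cdot>\<^sub>G F a c b)" by (rule sum.swap)
  also have "\<dots> = (\<Sum>b<4::nat. \<Sum>c<4::nat. (if opp b c then k else 0) \<cdot>\<^sub>G F a b c)"
    by (intro sum.cong refl) (metis opp_sym)
  finally show "(\<Sum>b<4::nat. \<Sum>c<4::nat. (if opp b c then k else 0) \<cdot>\<^sub>G F a c b) =
        (\<Sum>b<4::nat. \<Sum>c<4::nat. (if opp b c then k else 0) \<cdot>\<^sub>G F a b c)" .
qed

lemma final_match:
  "(\<Sum>g<4. \<Sum>h<4. \<Sum>c<4. (if opp g h then -4 else 0) \<cdot>\<^sub>G perm3 h g c g h c) =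
   (\<Sum>a<4. \<Sum>b<4. \<Sum>c<4. (if opp b c then -4 else 0) \<cdot>\<^sub>G Q a b c)"
proof -
  have "(\<Sum>g<4. \<Sum>h<4. \<Sum>c<4. (if opp g h then -4 else 0) \<cdot>\<^sub>G perm3 h g c g h c) =
        (\<Sum>a<4. \<Sum>b<4. \<Sum>c<4. (if opp b c then -4 else 0) \<cdot>\<^sub>G perm3 c b a b c a)"
    by (rule rot3)
  also have "\<dots> = (\<Sum>a<4. \<Sum>b<4. \<Sum>c<4. (if opp b c then -4 else 0) \<cdot>\<^sub>G T3 a b c)
      + (\<Sum>a<4. \<Sum>b<4. \<Sum>c<4. (if opp b c then -4 else 0) \<cdot>\<^sub>G T4 a c b)
      + (\<Sum>a<4. \<Sum>b<4. \<Sum>c<4. (if opp b c then -4 else 0) \<cdot>\<^sub>G T4 a b c)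
      + (\<Sum>a<4. \<Sum>b<4. \<Sum>c<4. (if opp b c then -4 else 0) \<cdot>\<^sub>G T2 a c b)
      + (\<Sum>a<4. \<Sum>b<4. \<Sum>c<4. (if opp b c then -4 else 0) \<cdot>\<^sub>G T2 a b c)
      + (\<Sum>a<4. \<Sum>b<4. \<Sum>c<4. (if opp b c then -4 else 0) \<cdot>\<^sub>G T1 a b c)"
    unfolding perm_eq by (simp only: gscale_add_right sum.distrib)
  also have "\<dots> = (\<Sum>a<4. \<Sum>b<4. \<Sum>c<4. (if opp b c then -4 else 0) \<cdot>\<^sub>G T3 a b c)
      + (\<Sum>a<4. \<Sum>b<4. \<Sum>c<4. (if opp b c then -4 else 0) \<cdot>\<^sub>G T4 a b c)
      + (\<Sum>a<4. \<Sum>b<4. \<Sum>c<4. (if opp b c then -4 else 0) \<cdot>\<^sub>G T4 a b c)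
      + (\<Sum>a<4. \<Sum>b<4. \<Sum>c<4. (if opp b c then -4 else 0) \<cdot>\<^sub>G T2 a b c)
      + (\<Sum>a<4. \<Sum>b<4. \<Sum>c<4. (if opp b c then -4 else 0) \<cdot>\<^sub>G T2 a b c)
      + (\<Sum>a<4. \<Sum>b<4. \<Sum>c<4. (if opp b c then -4 else 0) \<cdot>\<^sub>G T1 a b c)"
    by (simp only: swap_inner[where F=T4] swap_inner[where F=T2])
  also have "\<dots> = (\<Sum>a<4. \<Sum>b<4. \<Sum>c<4. (if opp b c then -4 else 0) \<cdot>\<^sub>G Q a b c)"
    unfolding Q_eq by (simp only: gscale_add_right sum.distrib add_ac)
  finally show ?thesis .
qed

definition Mu :: "nat set" where "Mu = {..<4}"

lemma sumMu: "sum F {..<4::nat} = sum F Mu" by (simp add: Mu_def)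
lemma swap34: "(\<Sum>x<3::nat. \<Sum>y<4::nat. f x y) = (\<Sum>y<4. \<Sum>x<3. f x y)" by (rule sum.swap)
lemma swapM4: "(\<Sum>x\<in>Mu. \<Sum>y<4::nat. f x y) = (\<Sum>y<4. \<Sum>x\<in>Mu. f x y)" by (rule sum.swap)
lemma swapM3: "(\<Sum>x\<in>Mu. \<Sum>y<3::nat. f x y) = (\<Sum>y<3. \<Sum>x\<in>Mu. f x y)" by (rule sum.swap)

lemma psiU_eq: "A < 3 \<Longrightarrow> psiU A d = psi d A"
  by (simp add: psiU_def gcol_sum)

lemma coef_eq:
  "(\<Sum>\<mu>\<in>Mu. cnj (gammaLDD \<mu> g h) * cnj (levi C G H) * (2 * beta2 c e * gammaDD \<mu> f d + beta2 c d * gammaDD \<mu> f e))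
   = levi C G H * (4 * beta2 c e * beta4 g h f d + 2 * beta2 c d * beta4 g h f e)"
proof -
  have s: "\<And>f d. (\<Sum>\<mu>\<in>Mu. cnj (gammaLDD \<mu> g h) * gammaDD \<mu> f d) = 2 * beta4 g h f d"
    by (simp add: beta4_def Mu_def)
  have "(\<Sum>\<mu>\<in>Mu. cnj (gammaLDD \<mu> g h) * cnj (levi C G H) * (2 * beta2 c e * gammaDD \<mu> f d + beta2 c d * gammaDD \<mu> f e))
     = (\<Sum>\<mu>\<in>Mu. (levi C G H * (2 * beta2 c e)) * (cnj (gammaLDD \<mu> g h) * gammaDD \<mu> f d)
                 + (levi C G H * beta2 c d) * (cnj (gammaLDD \<mu> g h) * gammaDD \<mu> f e))"
    by (rule sum.cong[OF refl]) (simp add: algebra_simps)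
  also have "\<dots> = (levi C G H * (2 * beta2 c e)) * (\<Sum>\<mu>\<in>Mu. cnj (gammaLDD \<mu> g h) * gammaDD \<mu> f d)
                 + (levi C G H * beta2 c d) * (\<Sum>\<mu>\<in>Mu. cnj (gammaLDD \<mu> g h) * gammaDD \<mu> f e)"
    by (simp only: sum.distrib sum_distrib_left)
  also have "\<dots> = levi C G H * (4 * beta2 c e * beta4 g h f d + 2 * beta2 c d * beta4 g h f e)"
    unfolding s by (simp add: algebra_simps)
  finally show ?thesis .
qed

lemma pwR1:
  assumes "A < 3"
  shows "(\<Sum>C<3. \<Sum>G<3. \<Sum>H<3. \<Sum>\<mu>\<in>Mu.
       (cnj (gammaLDD \<mu> g h) * cnj (levi C G H)
          * (2 * beta2 c e * gammaDD \<mu> f d + beta2 c d * gammaDD \<mu> f e)) \<cdot>\<^sub>G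
       (psib h H \<odot> psib g G \<odot> psib c C \<odot> psiU A d \<odot> Vc B e f))
   = (4 * beta2 c e * beta4 g h f d + 2 * beta2 c d * beta4 g h f e) \<cdot>\<^sub>G (Eb h g c \<odot> psi d A \<odot> Vc B e f)"
proof -
  let ?W = "4 * beta2 c e * beta4 g h f d + 2 * beta2 c d * beta4 g h f e"
  have "(\<Sum>C<3. \<Sum>G<3. \<Sum>H<3. \<Sum>\<mu>\<in>Mu.
       (cnj (gammaLDD \<mu> g h) * cnj (levi C G H)
          * (2 * beta2 c e * gammaDD \<mu> f d + beta2 c d * gammaDD \<mu> f e)) \<cdot>\<^sub>G
       (psib h H \<odot> psib g G \<odot> psib c C \<odot> psiU A d \<odot> Vc B e f))
     = (\<Sum>C<3. \<Sum>G<3. \<Sum>H<3. (levi C G H * ?W) \<cdot>\<^sub>G (psib h H \<odot> psib g G \<odot> psib c C \<odot> psi d A \<odot> Vc B e f))"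
    by (intro sum.cong refl) (simp only: gscale_sum_left[symmetric] coef_eq psiU_eq[OF assms])
  also have "\<dots> = ?W \<cdot>\<^sub>G (Eb h g c \<odot> psi d A \<odot> Vc B e f)"
    unfolding Eb_def gmul_sum_left gmul_scale_left gscale_sum_right gscale_assoc
    by (simp add: mult.commute)
  finally show ?thesis .
qed

lemma comb_lemma: "(-4) \<cdot>\<^sub>G (X1 + X2) + (-2) \<cdot>\<^sub>G (X3 + X3) = (-4) \<cdot>\<^sub>G (X2 + X1 + X3)"
  by (simp add: gscale_def fun_eq_iff algebra_simps)

lemma P3:
  assumes A: "A < 3" and B: "B < 3"
  shows "(if opp g h then (-4) \<cdot>\<^sub>G ((Eb h g c \<odot> psi (pp h) A \<odot> Vc B (pp c) (pp g)) + (Eb h g c \<odot> psi (pp g) A \<odot> Vc B (pp c) (pp h)))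
        + (-2) \<cdot>\<^sub>G ((Eb h g c \<odot> psi (pp c) A \<odot> Vc B (pp h) (pp g)) + (Eb h g c \<odot> psi (pp c) A \<odot> Vc B (pp g) (pp h))) else 0)
     = (if opp g h then -4 else 0) \<cdot>\<^sub>G (gcol A B \<cdot>\<^sub>G perm3 h g c g h c)"
proof (cases "opp g h")
  case False then show ?thesis by simp
next
  case True
  define u where "u = (\<lambda>l D. chi (sel g h c l) D)"
  have gu: "\<And>l D. isgen (u l D)" by (simp add: u_def)
  have Om: "Om g h c = Og u" by (simp add: Om_def u_def)
  have Sg_eq: "Sg u A B = chi g A \<odot> Vc B (pp h) (pp c) + chi h A \<odot> Vc B (pp c) (pp g) + chi c A \<odot> Vc B (pp g) (pp h)"
    by (simp add: Sg_def Fg_def u_def Vc_def chi_def sel_def)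
  have key: "Eb h g c \<odot> Sg u A B = gcol A B \<cdot>\<^sub>G perm3 h g c g h c"
    using R2gen[OF gu A B] R3[of h g c g h c] Om by (simp add: gmul_scale_right)
  have v1: "Vc B (pp c) (pp h) = Vc B (pp h) (pp c)" by (rule Vc_sym)
  have v2: "Vc B (pp h) (pp g) = Vc B (pp g) (pp h)" by (rule Vc_sym)
  have "(-4) \<cdot>\<^sub>G ((Eb h g c \<odot> psi (pp h) A \<odot> Vc B (pp c) (pp g)) + (Eb h g c \<odot> psi (pp g) A \<odot> Vc B (pp c) (pp h)))
        + (-2) \<cdot>\<^sub>G ((Eb h g c \<odot> psi (pp c) A \<odot> Vc B (pp h) (pp g)) + (Eb h g c \<odot> psi (pp c) A \<odot> Vc B (pp g) (pp h)))
      = (-4) \<cdot>\<^sub>G (Eb h g c \<odot> (chi h A \<odot> Vc B (pp c) (pp g)) + Eb h g c \<odot> (chi g A \<odot> Vc B (pp h) (pp c)))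
        + (-2) \<cdot>\<^sub>G (Eb h g c \<odot> (chi c A \<odot> Vc B (pp g) (pp h)) + Eb h g c \<odot> (chi c A \<odot> Vc B (pp g) (pp h)))"
    unfolding v1 v2 chi_def gmul_assoc ..
  also have "\<dots> = (-4) \<cdot>\<^sub>G (Eb h g c \<odot> Sg u A B)"
    unfolding Sg_eq gmul_add_right by (simp add: gscale_def fun_eq_iff algebra_simps)
  also have "\<dots> = (-4) \<cdot>\<^sub>G (gcol A B \<cdot>\<^sub>G perm3 h g c g h c)" unfolding key ..
  finally show ?thesis using True by simp
qed

lemma X2_eq: "X2 = (\<Sum>a<4. \<Sum>b<4. \<Sum>c<4. (if opp b c then -4 else 0) \<cdot>\<^sub>G Q a b c)"
proof -
  have "X2 = 4 \<cdot>\<^sub>G (\<Sum>a<4. \<Sum>b<4. \<Sum>c<4. (if opp b c then - (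
      (Jc a (pp a) \<odot> Jc b (pp b) \<odot> Jc c (pp c) + 2 \<cdot>\<^sub>G (Jc a (pp b) \<odot> Jc b (pp c) \<odot> Jc c (pp a)))
    + (Jc a (pp a) \<odot> Jc b (pp c) \<odot> Jc c (pp b) + 2 \<cdot>\<^sub>G (Jc a (pp c) \<odot> Jc b (pp b) \<odot> Jc c (pp a)))) else 0))"
    unfolding X2_def by (intro arg_cong[where f = "\<lambda>x. 4 \<cdot>\<^sub>G x"] sum.cong refl) (rule collapseL, simp_all)
  also have "\<dots> = (\<Sum>a<4. \<Sum>b<4. \<Sum>c<4. (if opp b c then -4 else 0) \<cdot>\<^sub>G Q a b c)"
  proof -
    have e: "\<And>P Z. 4 \<cdot>\<^sub>G (if P then - Z else 0) = (if P then -4 else 0) \<cdot>\<^sub>G Z"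
      by (simp add: gscale_neg_left gscale_neg_right)
    show ?thesis unfolding Q_def gscale_sum_right e ..
  qed
  finally show ?thesis .
qed

theorem lemma2:
  fixes A B :: nat
  assumes "A < 3" and "B < 3"
  shows "gcol A B \<cdot>\<^sub>G X2 =
    (\<Sum>\<mu><4. \<Sum>g<4. \<Sum>h<4. \<Sum>C<3. \<Sum>G<3. \<Sum>H<3. \<Sum>c<4. \<Sum>d<4. \<Sum>e<4. \<Sum>f<4.
       (cnj (gammaLDD \<mu> g h) * cnj (levi C G H)
          * (2 * beta2 c e * gammaDD \<mu> f d + beta2 c d * gammaDD \<mu> f e)) \<cdot>\<^sub>G
       (psib h H \<odot> psib g G \<odot> psib c C \<odot> psiU A d \<odot> Vc B e f))"
proof -
  have "(\<Sum>\<mu><4. \<Sum>g<4. \<Sum>h<4. \<Sum>C<3. \<Sum>G<3. \<Sum>H<3. \<Sum>c<4. \<Sum>d<4. \<Sum>e<4. \<Sum>f<4.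
       (cnj (gammaLDD \<mu> g h) * cnj (levi C G H)
          * (2 * beta2 c e * gammaDD \<mu> f d + beta2 c d * gammaDD \<mu> f e)) \<cdot>\<^sub>G
       (psib h H \<odot> psib g G \<odot> psib c C \<odot> psiU A d \<odot> Vc B e f))
     = (\<Sum>g<4. \<Sum>h<4. \<Sum>c<4. \<Sum>d<4. \<Sum>e<4. \<Sum>f<4. \<Sum>C<3. \<Sum>G<3. \<Sum>H<3. \<Sum>\<mu>\<in>Mu.
       (cnj (gammaLDD \<mu> g h) * cnj (levi C G H)
          * (2 * beta2 c e * gammaDD \<mu> f d + beta2 c d * gammaDD \<mu> f e)) \<cdot>\<^sub>G
       (psib h H \<odot> psib g G \<odot> psib c C \<odot> psiU A d \<odot> Vc B e f))"
    apply (rule trans[OF sumMu])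
    apply (simp only: swap34 swapM4 swapM3)
    done
  also have "\<dots> = (\<Sum>g<4. \<Sum>h<4. \<Sum>c<4. \<Sum>d<4. \<Sum>e<4. \<Sum>f<4.
       (4 * beta2 c e * beta4 g h f d + 2 * beta2 c d * beta4 g h f e) \<cdot>\<^sub>G (Eb h g c \<odot> psi d A \<odot> Vc B e f))"
    by (intro sum.cong refl) (rule pwR1[OF assms(1)])
  also have "\<dots> = (\<Sum>g<4. \<Sum>h<4. \<Sum>c<4.
       (if opp g h then (-4) \<cdot>\<^sub>G ((Eb h g c \<odot> psi (pp h) A \<odot> Vc B (pp c) (pp g)) + (Eb h g c \<odot> psi (pp g) A \<odot> Vc B (pp c) (pp h)))
        + (-2) \<cdot>\<^sub>G ((Eb h g c \<odot> psi (pp c) A \<odot> Vc B (pp h) (pp g)) + (Eb h g c \<odot> psi (pp c) A \<odot> Vc B (pp g) (pp h))) else 0))"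
    by (intro sum.cong refl) (rule collapseR, simp_all)
  also have "\<dots> = (\<Sum>g<4. \<Sum>h<4. \<Sum>c<4. (if opp g h then -4 else 0) \<cdot>\<^sub>G (gcol A B \<cdot>\<^sub>G perm3 h g c g h c))"
    by (intro sum.cong refl) (rule P3[OF assms])
  also have "\<dots> = gcol A B \<cdot>\<^sub>G (\<Sum>g<4. \<Sum>h<4. \<Sum>c<4. (if opp g h then -4 else 0) \<cdot>\<^sub>G perm3 h g c g h c)"
    by (simp only: gscale_sum_right gscale_assoc mult.commute)
  also have "\<dots> = gcol A B \<cdot>\<^sub>G X2" by (simp only: final_match X2_eq)
  finally show ?thesis by (rule sym)
qed

end
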